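(* Fix $R>0$. Then $E_{\mathcal A}(n,R)$ and $E_{\mathcal D}(n,R)$ are defined for all sufficiently large $n$, and: 1. If $R\ge1$, then $\lim_{n\to\infty}E_{\mathcal A}(n,R)=\frac{(2R-1)(R+1)}{2R^2}$ and $\lim_{n\to\infty}E_{\mathcal D}(n,R)=\frac{R+1}{2R}$. 2. If $R\le1$, then $\lim_{n\to\infty}E_{\mathcal A}(n,R)=\frac{R+1}{2}$ and $\lim_{n\to\infty}E_{\mathcal D}(n,R)=\frac{(2-R)(R+1)}{2}$.
   Context: For $x,y>0$, $\mathrm{less}(x,y)=y(\lceil x/y\rceil-1)$ and $\mathrm{less}(x)=\mathrm{less}(x,1)$. For positive integers $n$ with $\frac1n<R\le n$, let $\ell_1=\mathrm{less}(2n-\frac2R+1)$ and $\ell_2=\min\{n,\lfloor n/R\rfloor\}$. For $\ell=1,\dots,n$, let $R_\ell=\mathrm{less}(R,\frac{2}{\ell(\ell+1)})$ and $f(\ell)=n-\ell+\frac{\ell(\ell+1)R_\ell}{2n}$. Let $\mathrm{equilibrium}(n,R)=\ell_1/n$ if $\frac1n<R\le\frac2{n+1}$, and $\mathrm{equilibrium}(n,R)=f(\ell_2)$ if $\frac2{n+1}<R\le n$. This is the optimal expected number of objects won by the adversary bidder, of budget $R\beta$, against the disadvantaged bidder, of budget $\beta$, in the two-bidder position-randomized auction with $n$ objects. Define the effective winning ratios $$E_{\mathcal A}(n,R)=\frac{\mathrm{equilibrium}(n,R)}{nR/(R+1)},\qquad E_{\mathcal D}(n,R)=\frac{n-\mathrm{equilibrium}(n,R)}{n/(R+1)}.$$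 *)

theory Defs
  imports Complex_Main
begin

definition less2 :: "real \<Rightarrow> real \<Rightarrow> real" where
  "less2 x y = y * (real_of_int (\<lceil>x / y\<rceil>) - 1)"

definition less1 :: "real \<Rightarrow> real" where
  "less1 x = less2 x 1"

definition ell1 :: "nat \<Rightarrow> real \<Rightarrow> real" where
  "ell1 n R = less1 (2 * real n - 2 / R + 1)"

definition ell2 :: "nat \<Rightarrow> real \<Rightarrow> nat" where
  "ell2 n R = min n (nat \<lfloor>real n / R\<rfloor>)"

definition R_ell :: "real \<Rightarrow> nat \<Rightarrow> real" where
  "R_ell R l = less2 R (2 / (real l * (real l + 1)))"

definition f_ell :: "nat \<Rightarrow> real \<Rightarrow> nat \<Rightarrow> real" where
  "f_ell n R l = real n - real l + real l * (real l + 1) * R_ell R l / (2 * real n)"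

text \<open>Defined only for positive n with 1/n < R \<le> n; outside this range the value is irrelevant.\<close>
definition equilibrium :: "nat \<Rightarrow> real \<Rightarrow> real" where
  "equilibrium n R =
     (if 1 / real n < R \<and> R \<le> 2 / (real n + 1) then ell1 n R / real n
      else f_ell n R (ell2 n R))"

definition E_A :: "nat \<Rightarrow> real \<Rightarrow> real" where
  "E_A n R = equilibrium n R / (real n * R / (R + 1))"

definition E_D :: "nat \<Rightarrow> real \<Rightarrow> real" where
  "E_D n R = (real n - equilibrium n R) / (real n / (R + 1))"

definition eq_domain :: "nat \<Rightarrow> real \<Rightarrow> bool" where
  "eq_domain n R \<longleftrightarrow> n > 0 \<and> 1 / real n < R \<and> R \<le> real n"

end

theory Submission
  imports Defs
begin

lemma R_ell_bounds:
  assumes "l > 0"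
  shows "R - 2 / (real l * (real l + 1)) \<le> R_ell R l \<and> R_ell R l < R"
proof -
  define y where "y = 2 / (real l * (real l + 1))"
  have y: "y > 0" using assms by (simp add: y_def)
  have c1: "real_of_int \<lceil>R / y\<rceil> \<ge> R / y" by linarith
  have c2: "real_of_int \<lceil>R / y\<rceil> < R / y + 1" by linarith
  have e: "R_ell R l = y * (real_of_int \<lceil>R / y\<rceil> - 1)"
    by (simp add: R_ell_def less2_def y_def)
  have "y * (R / y) = R" using y by simp
  then have "R - y \<le> y * (real_of_int \<lceil>R / y\<rceil> - 1)"
    using mult_left_mono[OF c1, of y] y by (simp add: algebra_simps)
  moreover have "y * (real_of_int \<lceil>R / y\<rceil> - 1) < R"
    using mult_strict_left_mono[OF c2 y] y \<open>y * (R / y) = R\<close> by (simp add: algebra_simps)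
  ultimately show ?thesis using e y_def by simp
qed

lemma floor_ratio:
  assumes "R > 0"
  shows "(\<lambda>n. real (nat \<lfloor>real n / R\<rfloor>) / real n) \<longlonglongrightarrow> 1 / R"
proof (rule tendsto_sandwich[where f = "\<lambda>n. 1 / R - 1 / real n" and h = "\<lambda>n. 1 / R"])
  show "\<forall>\<^sub>F n in sequentially. 1 / R - 1 / real n \<le> real (nat \<lfloor>real n / R\<rfloor>) / real n"
    using eventually_gt_at_top[of "0::nat"]
  proof eventually_elim
    case (elim n)
    have f: "real (nat \<lfloor>real n / R\<rfloor>) = real_of_int \<lfloor>real n / R\<rfloor>"
      using assms by simp
    have "real n / R - 1 \<le> real_of_int \<lfloor>real n / R\<rfloor>" by linarith
    then have "(real n / R - 1) / real n \<le> real_of_int \<lfloor>real n / R\<rfloor> / real n"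
      using elim by (simp add: divide_right_mono)
    moreover have "(real n / R - 1) / real n = 1 / R - 1 / real n"
      using elim assms by (simp add: field_simps)
    ultimately show ?case using f by simp
  qed
  show "\<forall>\<^sub>F n in sequentially. real (nat \<lfloor>real n / R\<rfloor>) / real n \<le> 1 / R"
    using eventually_gt_at_top[of "0::nat"]
  proof eventually_elim
    case (elim n)
    have f: "real (nat \<lfloor>real n / R\<rfloor>) = real_of_int \<lfloor>real n / R\<rfloor>"
      using assms by simp
    have "real_of_int \<lfloor>real n / R\<rfloor> \<le> real n / R" by linarith
    then have "real_of_int \<lfloor>real n / R\<rfloor> / real n \<le> (real n / R) / real n"
      by (rule divide_right_mono) simp
    moreover have "(real n / R) / real n = 1 / R" using elim by simp
    ultimately show ?case using f by simp
  qed
  show "(\<lambda>n. 1 / R - 1 / real n) \<longlonglongrightarrow> 1 / R"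
    using tendsto_diff[OF tendsto_const[of "1/R"] lim_inverse_n'] by simp
  show "(\<lambda>n. 1 / R) \<longlonglongrightarrow> 1 / R" by simp
qed

lemma ell_ratio:
  assumes "R > 0"
  shows "(\<lambda>n. real (ell2 n R) / real n) \<longlonglongrightarrow> min 1 (1 / R)"
proof -
  have "(\<lambda>n. min 1 (real (nat \<lfloor>real n / R\<rfloor>) / real n)) \<longlonglongrightarrow> min 1 (1 / R)"
    by (intro tendsto_min tendsto_const floor_ratio assms)
  moreover have "\<forall>\<^sub>F n in sequentially. min 1 (real (nat \<lfloor>real n / R\<rfloor>) / real n)
      = real (ell2 n R) / real n"
    using eventually_gt_at_top[of "0::nat"]
  proof eventually_elim
    case (elim n)
    then show ?case by (simp add: ell2_def min_divide_distrib_right of_nat_min)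
  qed
  ultimately show ?thesis by (rule Lim_transform_eventually)
qed


lemma eventually_big:
  assumes "R > 0"
  shows "\<forall>\<^sub>F n in sequentially. eq_domain n R \<and> \<not> R \<le> 2 / (real n + 1) \<and> ell2 n R > 0"
proof -
  obtain N :: nat where N: "real N > 2 / R + R + 1" using reals_Archimedean2 by blast
  show ?thesis using eventually_ge_at_top[of N]
  proof eventually_elim
    case (elim n)
    have nN: "real n \<ge> real N" using elim by simp
    have p: "2 / R > 0" using assms by simp
    have n0: "real n > 0" using nN N p assms by linarith
    have "1 / R \<le> 2 / R" using assms by (simp add: divide_right_mono)
    then have "real n > 1 / R" using nN N p assms by linarith
    then have a1: "1 / real n < R" using n0 assms by (simp add: field_simps)
    have "real n + 1 > 2 / R" using nN N assms by linarith
    then have a2: "\<not> R \<le> 2 / (real n + 1)" using n0 assms by (simp add: field_simps)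
    have a3: "R \<le> real n" using nN N p by linarith
    have "real n / R \<ge> 1" using a3 assms by simp
    then have "\<lfloor>real n / R\<rfloor> \<ge> 1" by linarith
    then have "nat \<lfloor>real n / R\<rfloor> > 0" by linarith
    moreover have "n > 0" using n0 by simp
    ultimately have "ell2 n R > 0" by (simp add: ell2_def)
    then show ?case using a1 a2 a3 n0 by (simp add: eq_domain_def)
  qed
qed

lemma eq_ratio:
  assumes "R > 0"
  shows "(\<lambda>n. equilibrium n R / real n) \<longlonglongrightarrow>
     1 - min 1 (1 / R) + min 1 (1 / R) * min 1 (1 / R) * R / 2"
proof -
  define a where "a n = real (ell2 n R) / real n" for n
  define g where "g n = 1 - a n + a n * (a n + 1 / real n) * R / 2" for n
  define err where "err n = equilibrium n R / real n - g n" for n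
  have ga: "a \<longlonglongrightarrow> min 1 (1 / R)" unfolding a_def by (rule ell_ratio[OF assms])
  have gl: "g \<longlonglongrightarrow> 1 - min 1 (1 / R) + min 1 (1 / R) * (min 1 (1 / R) + 0) * R / 2"
    unfolding g_def by (intro tendsto_intros ga lim_inverse_n') simp_all
  have eb: "\<forall>\<^sub>F n in sequentially. norm (err n) \<le> 1 / real n"
    using eventually_big[OF assms]
  proof eventually_elim
    case (elim n)
    define l where "l = ell2 n R"
    have l0: "l > 0" using elim l_def by simp
    have n0: "real n > 0" using elim by (simp add: eq_domain_def)
    have b: "R - 2 / (real l * (real l + 1)) \<le> R_ell R l \<and> R_ell R l < R"
      using R_ell_bounds[OF l0] .
    have eqv: "equilibrium n R = f_ell n R l" using elim by (simp add: equilibrium_def l_def)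
    have ll: "real l * (real l + 1) > 0" using l0 by simp
    have e: "err n = real l * (real l + 1) * (R_ell R l - R) / (2 * real n ^ 2)"
      unfolding err_def g_def a_def eqv f_ell_def l_def[symmetric]
      using n0 by (simp add: field_simps power2_eq_square)
    have "real l * (real l + 1) * (R - R_ell R l) \<le> real l * (real l + 1) * (2 / (real l * (real l + 1)))"
      using b ll by (intro mult_left_mono) auto
    also have "\<dots> = 2" using ll by (metis nonzero_mult_div_cancel_left times_divide_eq_right zero_neq_numeral less_irrefl)
    finally have u: "real l * (real l + 1) * (R - R_ell R l) \<le> 2" .
    have v: "real l * (real l + 1) * (R - R_ell R l) \<ge> 0" using b ll by simp
    have "norm (err n) = real l * (real l + 1) * (R - R_ell R l) / (2 * real n ^ 2)"
    proof -
      have e': "err n = - (real l * (real l + 1) * (R - R_ell R l) / (2 * real n ^ 2))"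
        unfolding e minus_divide_left by (rule arg_cong[where f="\<lambda>x. x / _"]) (simp add: algebra_simps)
      have "real l * (real l + 1) * (R - R_ell R l) / (2 * real n ^ 2) \<ge> 0"
        using v n0 by simp
      then show ?thesis using e' by (simp only: norm_minus_cancel real_norm_def abs_of_nonneg)
    qed
    also have "\<dots> \<le> 2 / (2 * real n ^ 2)" using u n0 by (intro divide_right_mono) auto
    also have "\<dots> \<le> 1 / real n" using n0 elim by (simp add: field_simps power2_eq_square eq_domain_def)
    finally show ?case .
  qed
  have "err \<longlonglongrightarrow> 0"
  proof (rule tendsto_norm_zero_cancel)
    show "(\<lambda>n. norm (err n)) \<longlonglongrightarrow> 0"
      by (rule tendsto_sandwich[OF _ eb tendsto_const lim_inverse_n']) simp
  qed
  then have "(\<lambda>n. g n + err n) \<longlonglongrightarrow> 1 - min 1 (1 / R) + min 1 (1 / R) * (min 1 (1 / R) + 0) * R / 2 + 0"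
    by (intro tendsto_add gl)
  then show ?thesis by (simp add: err_def)
qed

theorem corollary1:
  fixes R :: real
  assumes "R > 0"
  shows "(\<forall>\<^sub>F n in sequentially. eq_domain n R)
    \<and> (R \<ge> 1 \<longrightarrow>
         (\<lambda>n. E_A n R) \<longlonglongrightarrow> (2 * R - 1) * (R + 1) / (2 * R^2) \<and>
         (\<lambda>n. E_D n R) \<longlonglongrightarrow> (R + 1) / (2 * R))
    \<and> (R \<le> 1 \<longrightarrow>
         (\<lambda>n. E_A n R) \<longlonglongrightarrow> (R + 1) / 2 \<and>
         (\<lambda>n. E_D n R) \<longlonglongrightarrow> (2 - R) * (R + 1) / 2)"
proof -
  define L where "L = 1 - min 1 (1 / R) + min 1 (1 / R) * min 1 (1 / R) * R / 2"
  have q: "(\<lambda>n. equilibrium n R / real n) \<longlonglongrightarrow> L" unfolding L_def by (rule eq_ratio[OF assms])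
  have ea: "(\<lambda>n. E_A n R) \<longlonglongrightarrow> L * ((R + 1) / R)"
  proof -
    have "(\<lambda>n. equilibrium n R / real n * ((R + 1) / R)) \<longlonglongrightarrow> L * ((R + 1) / R)"
      by (intro tendsto_intros q)
    moreover have "\<forall>\<^sub>F n in sequentially. equilibrium n R / real n * ((R + 1) / R) = E_A n R"
      using eventually_gt_at_top[of "0::nat"]
      by eventually_elim (use assms in \<open>simp add: E_A_def field_simps\<close>)
    ultimately show ?thesis by (rule Lim_transform_eventually)
  qed
  have ed: "(\<lambda>n. E_D n R) \<longlonglongrightarrow> (1 - L) * (R + 1)"
  proof -
    have "(\<lambda>n. (1 - equilibrium n R / real n) * (R + 1)) \<longlonglongrightarrow> (1 - L) * (R + 1)"
      by (intro tendsto_intros q)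
    moreover have "\<forall>\<^sub>F n in sequentially. (1 - equilibrium n R / real n) * (R + 1) = E_D n R"
      using eventually_gt_at_top[of "0::nat"]
      by eventually_elim (use assms in \<open>simp add: E_D_def field_simps\<close>)
    ultimately show ?thesis by (rule Lim_transform_eventually)
  qed
  have dom: "\<forall>\<^sub>F n in sequentially. eq_domain n R"
    using eventually_big[OF assms] by (rule eventually_mono) simp
  have c1: "R \<ge> 1 \<Longrightarrow> L * ((R + 1) / R) = (2 * R - 1) * (R + 1) / (2 * R^2)
      \<and> (1 - L) * (R + 1) = (R + 1) / (2 * R)"
  proof -
    assume r: "R \<ge> 1"
    then have "min 1 (1 / R) = 1 / R" by simp
    then show ?thesis using r unfolding L_def by (simp add: field_simps power2_eq_square)
  qed
  have c2: "R \<le> 1 \<Longrightarrow> L * ((R + 1) / R) = (R + 1) / 2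
      \<and> (1 - L) * (R + 1) = (2 - R) * (R + 1) / 2"
  proof -
    assume r: "R \<le> 1"
    then have "min 1 (1 / R) = 1" using assms by (simp add: field_simps)
    then show ?thesis using assms unfolding L_def by (simp add: field_simps)
  qed
  show ?thesis
  proof (intro conjI impI)
    show "\<forall>\<^sub>F n in sequentially. eq_domain n R" by (rule dom)
  next
    assume r: "R \<ge> 1"
    show "(\<lambda>n. E_A n R) \<longlonglongrightarrow> (2 * R - 1) * (R + 1) / (2 * R^2)"
      using ea c1[OF r] by metis
    show "(\<lambda>n. E_D n R) \<longlonglongrightarrow> (R + 1) / (2 * R)"
      using ed c1[OF r] by metis
  next
    assume r: "R \<le> 1"
    show "(\<lambda>n. E_A n R) \<longlonglongrightarrow> (R + 1) / 2"
      using ea c2[OF r] by metis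
    show "(\<lambda>n. E_D n R) \<longlonglongrightarrow> (2 - R) * (R + 1) / 2"
      using ed c2[OF r] by metis
  qed
qed

end
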